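(* Under the standing setup (in either Scenario I or Scenario II), assume $0<h<\frac{1}{d_{\max}}$ and that the expected graph is strongly connected. Then: (i) For the discrete-time system $x(t_{k+1})=(I-hL_{\sigma_k})^{\bar k}x(t_k)$, for every $x(0)\in\mathbb{R}^n$, $\lim_{k\to\infty}\mathbb{E}[x(t_k)]=\mathbf{1}\bar\pi_1^T x(0)$, where $W_1=\mathbb{E}[(I-hL_{\sigma_k})^{\bar k}]=\sum_{i=1}^4 p_i (I-hL_i)^{\bar k}$ satisfies $\lim_{k\to\infty}W_1^k=\mathbf{1}\bar\pi_1^T$, and $\bar\pi_1>0$ (entrywise) is a left eigenvector of $W_1$ for eigenvalue $1$ with $\bar\pi_1^T\mathbf{1}=1$. (ii) For the limiting ($h\to0$) system $x(t_{k+1})=e^{-L_{\sigma_k}\Delta}x(t_k)$, for every $x(0)\in\mathbb{R}^n$, $\lim_{k\to\infty}\mathbb{E}[x(t_k)]=\mathbf{1}\bar\pi_2^T x(0)$, where $W_2=\mathbb{E}[e^{-L_{\sigma_k}\Delta}]=\sum_{i=1}^4 p_i e^{-L_i\Delta}$ satisfies $\lim_{k\to\infty}W_2^k=\mathbf{1}\bar\pi_2^T$, and $\bar\pi_2>0$ is a left eigenvector of $W_2$ for eigenvalue $1$ with $\bar\pi_2^T\mathbf{1}=1$. In particular both systems reach consensus in mean.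
   Context: Standing setup. $n\ge3$ agents. $G$ is an undirected connected graph on $\{1,\dots,n\}$ with symmetric $0/1$ adjacency matrix $A=[a_{ij}]$ (zero diagonal), degrees $d_i=\sum_j a_{ij}$, $d_{\max}=\max_i d_i$, and Laplacian $L=\mathrm{diag}(d_1,\dots,d_n)-A$, with entries $l_{ij}$. For a (possibly directed) $0/1$ adjacency matrix $B$ ($b_{ij}=1$ meaning agent $i$ receives from agent $j$), its Laplacian is $\mathrm{diag}(B\mathbf{1})-B$. Scenario I (agents 1,2 may fail to receive): $A_1$ is $A$ with row 1 set to zero, $A_2$ is $A$ with row 2 set to zero, $A_3$ is $A$ with rows 1 and 2 set to zero, $A_4=A$. Scenario II (agents 1,2 may fail to send): same with columns instead of rows. $L_i$ is the Laplacian of $A_i$ (so $L_4=L$). Probabilities $p_1=\alpha,p_2=\beta,p_3=\gamma,p_4=\theta\in(0,1)$ with $\alpha+\beta+\gamma+\theta=1$. The expected graph is the directed graph with weighted adjacency matrix $\sum_{i=1}^4 p_iA_i$. Sampling period $h>0$, integer $\bar k\ge1$, $\Delta=\bar k h$, $t_k=k\Delta$. $\sigma_0,\sigma_1,\dots$ are i.i.d. random variables in $\{1,2,3,4\}$ with $P(\sigma_k=i)=p_i$ (the graph is held fixed on each interval of length $\Delta$, during which the delta-operator system $\delta x=-L_{\sigma_k}x$ with step $h$ is run $\bar k$ times). The initial state $x(t_0)=x(0)\in\mathbb{R}^n$ is deterministic. $\mathbf{1}$ is the all-ones column vector. *)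

theory Defs
  imports "HOL-Analysis.Analysis" "HOL-Probability.Probability"
begin

text \<open>Matrices over the finite agent type 'n (agents = elements of 'n, n = CARD('n)).\<close>

primrec matpow :: "real^'n^'n \<Rightarrow> nat \<Rightarrow> real^'n^'n" where
  "matpow M 0 = mat 1"
| "matpow M (Suc k) = M ** matpow M k"

definition mexp :: "real^'n^'n \<Rightarrow> real^'n^'n" where
  "mexp M = (\<Sum>k. (1 / fact k) *\<^sub>R matpow M k)"

definition laplacian :: "real^'n^'n \<Rightarrow> real^'n^'n" where
  "laplacian B = (\<chi> i j. if i = j then (\<Sum>k\<in>UNIV. B$i$k) else 0) - B"

definition degree :: "real^'n^'n \<Rightarrow> 'n \<Rightarrow> real" where
  "degree A i = (\<Sum>j\<in>UNIV. A$i$j)"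

definition dmax :: "real^'n^'n \<Rightarrow> real" where
  "dmax A = Max (range (degree A))"

definition simple_graph_adj :: "real^'n^'n \<Rightarrow> bool" where
  "simple_graph_adj A \<longleftrightarrow> (\<forall>i j. A$i$j = 0 \<or> A$i$j = 1) \<and> transpose A = A
     \<and> (\<forall>i. A$i$i = 0)"

text \<open>For symmetric A this is ordinary connectivity.\<close>
definition strongly_connected :: "real^'n^'n \<Rightarrow> bool" where
  "strongly_connected B \<longleftrightarrow> (\<forall>i j. (\<lambda>u v. B$u$v > 0)\<^sup>*\<^sup>* i j)"

definition zero_rows :: "'n set \<Rightarrow> real^'n^'n \<Rightarrow> real^'n^'n" where
  "zero_rows S B = (\<chi> i j. if i \<in> S then 0 else B$i$j)"

definition zero_cols :: "'n set \<Rightarrow> real^'n^'n \<Rightarrow> real^'n^'n" where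
  "zero_cols S B = (\<chi> i j. if j \<in> S then 0 else B$i$j)"

datatype scenario = ScenarioI | ScenarioII

text \<open>Switching adjacency matrices A_1..A_4 (indices 1..4; other indices give A).
  Agents 1 and 2 are the elements a1, a2 of 'n.\<close>
definition switch_adj :: "scenario \<Rightarrow> 'n \<Rightarrow> 'n \<Rightarrow> real^'n^'n \<Rightarrow> nat \<Rightarrow> real^'n^'n" where
  "switch_adj sc a1 a2 A i =
     (let z = (case sc of ScenarioI \<Rightarrow> zero_rows | ScenarioII \<Rightarrow> zero_cols) in
      if i = 1 then z {a1} A
      else if i = 2 then z {a2} A
      else if i = 3 then z {a1, a2} A
      else A)"

primrec traj :: "(nat \<Rightarrow> real^'n^'n) \<Rightarrow> (nat \<Rightarrow> 'w \<Rightarrow> nat) \<Rightarrow> real^'n \<Rightarrow> nat \<Rightarrow> 'w \<Rightarrow> real^'n" where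
  "traj Phi \<sigma> x0 0 \<omega> = x0"
| "traj Phi \<sigma> x0 (Suc k) \<omega> = Phi (\<sigma> k \<omega>) *v traj Phi \<sigma> x0 k \<omega>"

definition ones_outer :: "real^'n \<Rightarrow> real^'n^'n" where
  "ones_outer \<pi> = (\<chi> i j. \<pi>$j)"

end

theory Submission
  imports Defs
begin


lemma matpow_add: "matpow M (a + b) = matpow M a ** matpow M b"
  by (induction a) (auto simp: matrix_mul_assoc matrix_mul_lid)

lemma matpow_Suc': "matpow M (Suc k) = matpow M k ** M"
proof -
  have "matpow M (k + 1) = matpow M k ** matpow M 1" by (rule matpow_add)
  then show ?thesis by (simp add: matrix_mul_rid)
qed

definition stoch :: "real^'n^'n \<Rightarrow> bool" where
  "stoch W \<longleftrightarrow> (\<forall>i j. 0 \<le> W$i$j) \<and> (\<forall>i. (\<Sum>j\<in>UNIV. W$i$j) = 1)"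

lemma stoch_mul: assumes "stoch P" "stoch Q" shows "stoch (P ** Q)"
proof -
  have nn: "0 \<le> (P ** Q)$i$j" for i j
    using assms unfolding stoch_def matrix_matrix_mult_def by (auto intro!: sum_nonneg)
  have "(\<Sum>j\<in>UNIV. (P ** Q)$i$j) = 1" for i
  proof -
    have "(\<Sum>j\<in>UNIV. (P ** Q)$i$j) = (\<Sum>j\<in>UNIV. \<Sum>k\<in>UNIV. P$i$k * Q$k$j)"
      by (simp add: matrix_matrix_mult_def)
    also have "\<dots> = (\<Sum>k\<in>UNIV. P$i$k * (\<Sum>j\<in>UNIV. Q$k$j))"
      by (subst sum.swap) (simp add: sum_distrib_left)
    also have "\<dots> = 1" using assms by (simp add: stoch_def)
    finally show ?thesis .
  qed
  with nn show ?thesis by (simp add: stoch_def)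
qed

lemma stoch_id: "stoch (mat 1 :: real^'n^'n)"
  by (simp add: stoch_def mat_def if_distrib sum.delta cong: if_cong)

lemma stoch_matpow: "stoch W \<Longrightarrow> stoch (matpow W k)"
  by (induction k) (auto simp: stoch_id stoch_mul)

lemma stoch_le1: "stoch W \<Longrightarrow> W$i$j \<le> 1"
proof -
  assume s: "stoch W"
  have "W$i$j \<le> (\<Sum>j\<in>UNIV. W$i$j)"
    using s by (intro member_le_sum) (auto simp: stoch_def)
  with s show ?thesis by (simp add: stoch_def)
qed

lemma stoch_comb:
  assumes "finite I" "\<forall>i\<in>I. 0 \<le> p i" "(\<Sum>i\<in>I. p i) = 1" "\<forall>i\<in>I. stoch (\<Phi> i)"
  shows "stoch (\<Sum>i\<in>I. p i *\<^sub>R \<Phi> i)"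
proof -
  have e: "(\<Sum>i\<in>I. p i *\<^sub>R \<Phi> i)$u$v = (\<Sum>i\<in>I. p i * \<Phi> i$u$v)" for u v
    by (simp add: sum_component)
  have "0 \<le> (\<Sum>i\<in>I. p i *\<^sub>R \<Phi> i)$u$v" for u v
    unfolding e using assms by (auto intro!: sum_nonneg simp: stoch_def)
  moreover have "(\<Sum>v\<in>UNIV. (\<Sum>i\<in>I. p i *\<^sub>R \<Phi> i)$u$v) = 1" for u
  proof -
    have "(\<Sum>v\<in>UNIV. (\<Sum>i\<in>I. p i *\<^sub>R \<Phi> i)$u$v) = (\<Sum>i\<in>I. p i * (\<Sum>v\<in>UNIV. \<Phi> i$u$v))"
      unfolding e by (subst sum.swap) (simp add: sum_distrib_left)
    also have "\<dots> = 1" using assms by (simp add: stoch_def)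
    finally show ?thesis .
  qed
  ultimately show ?thesis by (simp add: stoch_def)
qed



definition vmax :: "real^'n \<Rightarrow> real" where "vmax x = Max (range (\<lambda>i. x$i))"
definition vmin :: "real^'n \<Rightarrow> real" where "vmin x = Min (range (\<lambda>i. x$i))"

lemma vmax_ge: "x$i \<le> vmax x" unfolding vmax_def by (rule Max_ge) auto
lemma vmin_le: "vmin x \<le> x$i" unfolding vmin_def by (rule Min_le) auto
lemma vmax_ex: "\<exists>i. vmax x = x$i"
proof -
  have "Max (range (\<lambda>i. x$i)) \<in> range (\<lambda>i. x$i)" by (rule Max_in) auto
  then show ?thesis unfolding vmax_def by blast
qed
lemma vmin_ex: "\<exists>i. vmin x = x$i"
proof -
  have "Min (range (\<lambda>i. x$i)) \<in> range (\<lambda>i. x$i)" by (rule Min_in) auto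
  then show ?thesis unfolding vmin_def by blast
qed

lemma stoch_row_bounds:
  assumes s: "stoch P"
  shows "vmin x \<le> (P *v x)$i" "(P *v x)$i \<le> vmax x"
proof -
  have "(P *v x)$i = (\<Sum>l\<in>UNIV. P$i$l * x$l)" by (simp add: matrix_vector_mult_def)
  also have "\<dots> \<le> (\<Sum>l\<in>UNIV. P$i$l * vmax x)"
    using s by (intro sum_mono mult_left_mono) (auto simp: stoch_def vmax_ge)
  also have "\<dots> = vmax x" using s by (simp add: stoch_def sum_distrib_right[symmetric])
  finally show "(P *v x)$i \<le> vmax x" .
  have "vmin x = (\<Sum>l\<in>UNIV. P$i$l * vmin x)" using s by (simp add: stoch_def sum_distrib_right[symmetric])
  also have "\<dots> \<le> (\<Sum>l\<in>UNIV. P$i$l * x$l)"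
    using s by (intro sum_mono mult_left_mono) (auto simp: stoch_def vmin_le)
  also have "\<dots> = (P *v x)$i" by (simp add: matrix_vector_mult_def)
  finally show "vmin x \<le> (P *v x)$i" .
qed

lemma stoch_vmax: "stoch P \<Longrightarrow> vmax (P *v x) \<le> vmax x"
  using vmax_ex[of "P *v x"] stoch_row_bounds by metis
lemma stoch_vmin: "stoch P \<Longrightarrow> vmin x \<le> vmin (P *v x)"
  using vmin_ex[of "P *v x"] stoch_row_bounds by metis

lemma contract:
  assumes s: "stoch P" and d: "\<forall>i j. \<delta> \<le> P$i$j" and d0: "0 \<le> \<delta>"
  shows "vmax (P *v x) - vmin (P *v x) \<le> (1 - \<delta>) * (vmax x - vmin x)"
proof -
  obtain l0 where l0: "vmin x = x$l0" using vmin_ex by blast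
  obtain l1 where l1: "vmax x = x$l1" using vmax_ex by blast
  have up: "(P *v x)$i \<le> vmax x - \<delta> * (vmax x - vmin x)" for i
  proof -
    have "(P *v x)$i = vmax x - (\<Sum>l\<in>UNIV. P$i$l * (vmax x - x$l))"
      using s by (simp add: matrix_vector_mult_def stoch_def right_diff_distrib sum_subtractf
          sum_distrib_right[symmetric])
    also have "(\<Sum>l\<in>UNIV. P$i$l * (vmax x - x$l)) \<ge> P$i$l0 * (vmax x - x$l0)"
      using s vmax_ge[of x] by (intro member_le_sum) (auto simp: stoch_def)
    moreover have "P$i$l0 * (vmax x - x$l0) \<ge> \<delta> * (vmax x - vmin x)"
      using mult_right_mono[of \<delta> "P$i$l0" "vmax x - x$l0"] d l0 vmax_ge[of x l0] by auto
    ultimately show ?thesis by linarith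
  qed
  have lo: "(P *v x)$i \<ge> vmin x + \<delta> * (vmax x - vmin x)" for i
  proof -
    have "(P *v x)$i = vmin x + (\<Sum>l\<in>UNIV. P$i$l * (x$l - vmin x))"
      using s by (simp add: matrix_vector_mult_def stoch_def right_diff_distrib sum_subtractf
          sum_distrib_right[symmetric])
    also have "(\<Sum>l\<in>UNIV. P$i$l * (x$l - vmin x)) \<ge> P$i$l1 * (x$l1 - vmin x)"
      using s vmin_le[of x] by (intro member_le_sum) (auto simp: stoch_def)
    moreover have "P$i$l1 * (x$l1 - vmin x) \<ge> \<delta> * (vmax x - vmin x)"
      using mult_right_mono[of \<delta> "P$i$l1" "x$l1 - vmin x"] d l1 vmin_le[of x l1] by auto
    ultimately show ?thesis by linarith
  qed
  obtain i0 where i0: "vmax (P *v x) = (P *v x)$i0" using vmax_ex by blast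
  obtain i1 where i1: "vmin (P *v x) = (P *v x)$i1" using vmin_ex by blast
  have "0 \<le> \<delta> * (vmax x - vmin x)" using d0 vmin_le[of x] vmax_ge[of x] 
    by (metis diff_ge_0_iff_ge mult_nonneg_nonneg order.trans)
  then show ?thesis using up[of i0] lo[of i1] i0 i1 by (simp add: algebra_simps)
qed

lemma nonneg_matpow_step:
  assumes nn: "\<forall>i j. 0 \<le> P$i$j"
  shows "P$u$u * (matpow P k)$u$v \<le> (matpow P (Suc k))$u$v"
proof -
  have nn2: "\<forall>i j. 0 \<le> (matpow P k)$i$j"
  proof (induction k)
    case 0 then show ?case by (simp add: mat_def)
  next
    case (Suc k) then show ?case using nn
      by (auto simp: matrix_matrix_mult_def intro!: sum_nonneg)
  qed
  show ?thesis
    unfolding matpow.simps matrix_matrix_mult_def using nn nn2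
    by (simp, intro member_le_sum[where f="\<lambda>l. P$u$l * matpow P k$l$v"]) auto
qed

lemma nonneg_matpow: "\<forall>i j. 0 \<le> P$i$j \<Longrightarrow> 0 \<le> (matpow P k)$i$j"
proof (induction k arbitrary: i j)
  case 0 then show ?case by (simp add: mat_def)
next
  case (Suc k) then show ?case
    by (auto simp: matrix_matrix_mult_def intro!: sum_nonneg)
qed

lemma pos_mono:
  assumes nn: "\<forall>i j. 0 \<le> P$i$j" and dg: "\<forall>i. 0 < P$i$i"
    and p: "0 < (matpow P k)$u$v" and km: "k \<le> m"
  shows "0 < (matpow P m)$u$v"
  using km
proof (induction m rule: dec_induct)
  case base then show ?case using p .
next
  case (step m)
  have "0 < P$u$u * (matpow P m)$u$v" using step dg by simp
  also have "\<dots> \<le> (matpow P (Suc m))$u$v" by (rule nonneg_matpow_step[OF nn])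
  finally show ?case .
qed

lemma pos_path:
  assumes nn: "\<forall>i j. 0 \<le> P$i$j"
    and r: "(\<lambda>u v. P$u$v > 0)\<^sup>*\<^sup>* i j"
  shows "\<exists>k. 0 < (matpow P k)$i$j"
  using r
proof (induction rule: converse_rtranclp_induct)
  case base then show ?case by (rule exI[of _ 0]) (simp add: mat_def)
next
  case (step y z)
  then obtain k where k: "0 < (matpow P k)$z$j" by blast
  have "0 < P$y$z * (matpow P k)$z$j" using step k by simp
  also have "\<dots> \<le> (matpow P (Suc k))$y$j"
    unfolding matpow.simps matrix_matrix_mult_def using nn nonneg_matpow[OF nn]
    by (simp, intro member_le_sum[where f="\<lambda>l. P$y$l * matpow P k$l$j"]) auto
  finally show ?case by blast
qed



lemma column_limit:
  fixes W :: "real^'n^'n"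
  assumes s: "stoch W" and K: "\<forall>i j. \<delta> \<le> (matpow W K)$i$j" and d0: "0 < \<delta>"
  shows "\<exists>L. \<delta> \<le> L \<and> (\<forall>i. (\<lambda>k. (matpow W k)$i$j) \<longlonglongrightarrow> L)"
proof -
  define c where "c k = (\<chi> i. (matpow W k)$i$j)" for k
  have crec: "c (k + m) = matpow W k *v c m" for k m
    by (simp add: c_def vec_eq_iff matpow_add matrix_matrix_mult_def matrix_vector_mult_def)
  have c1: "c (Suc m) = W *v c m" for m
    using crec[of 1 m] by (simp add: matrix_mul_rid)
  define a where "a k = vmax (c k)" for k
  define b where "b k = vmin (c k)" for k
  have da: "decseq a" unfolding decseq_Suc_iff a_def c1 using stoch_vmax[OF s] by blast
  have ib: "incseq b" unfolding incseq_Suc_iff b_def c1 using stoch_vmin[OF s] by blast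
  have ba: "b k \<le> a k" for k unfolding a_def b_def using vmin_le[of "c k" undefined] vmax_ge[of "c k" undefined] by linarith
  have sK: "stoch (matpow W K)" by (rule stoch_matpow[OF s])
  have d1: "\<delta> \<le> 1" using K[rule_format, of undefined undefined] stoch_le1[OF sK, of undefined undefined] by linarith
  have dec: "a (K*m) - b (K*m) \<le> (1-\<delta>)^m" for m
  proof (induction m)
    case 0
    have "a 0 \<le> 1" unfolding a_def using vmax_ex[of "c 0"] by (auto simp: c_def mat_def)
    moreover have "0 \<le> b 0" unfolding b_def using vmin_ex[of "c 0"] by (auto simp: c_def mat_def)
    ultimately show ?case by simp
  next
    case (Suc m)
    have "c (K * Suc m) = matpow W K *v c (K*m)" using crec[of K "K*m"] by (simp add: add.commute)
    then have "a (K * Suc m) - b (K * Suc m) \<le> (1-\<delta>) * (a (K*m) - b (K*m))"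
      unfolding a_def b_def using contract[OF sK K] d0 by simp
    also have "\<dots> \<le> (1-\<delta>) * (1-\<delta>)^m" using Suc d1 by (intro mult_left_mono) auto
    finally show ?case by simp
  qed
  obtain La where La: "a \<longlonglongrightarrow> La" "\<forall>i. La \<le> a i"
  proof (rule decseq_convergent[OF da, of "b 0"])
    show "\<forall>i. b 0 \<le> a i" using ib ba unfolding incseq_def by (meson le0 order.trans)
  qed
  obtain Lb where Lb: "b \<longlonglongrightarrow> Lb" "\<forall>i. b i \<le> Lb"
  proof (rule incseq_convergent[OF ib, of "a 0"])
    show "\<forall>i. b i \<le> a 0" using da ba unfolding decseq_def by (meson le0 order.trans)
  qed
  have "Lb \<le> La" using LIMSEQ_le[OF Lb(1) La(1)] ba by blast
  moreover have "La - Lb \<le> 0"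
  proof (rule LIMSEQ_le_const)
    show "(\<lambda>m. (1-\<delta>)^m) \<longlonglongrightarrow> 0" using d0 d1 by (intro LIMSEQ_power_zero) auto
    show "\<exists>N. \<forall>n\<ge>N. La - Lb \<le> (1-\<delta>)^n"
    proof (intro exI allI impI)
      fix n :: nat
      have "La - Lb \<le> a (K*n) - b (K*n)" using La(2) Lb(2) by (intro diff_mono) auto
      then show "La - Lb \<le> (1-\<delta>)^n" using dec[of n] by linarith
    qed
  qed
  ultimately have eq: "La = Lb" by simp
  have "\<forall>i. (\<lambda>k. (matpow W k)$i$j) \<longlonglongrightarrow> La"
  proof
    fix i
    show "(\<lambda>k. (matpow W k)$i$j) \<longlonglongrightarrow> La"
    proof (rule tendsto_sandwich[OF _ _ Lb(1)[folded eq] La(1)])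
      show "\<forall>\<^sub>F k in sequentially. b k \<le> matpow W k $ i $ j"
        unfolding b_def using vmin_le[of "c _" i] by (simp add: c_def)
      show "\<forall>\<^sub>F k in sequentially. matpow W k $ i $ j \<le> a k"
        unfolding a_def using vmax_ge[of "c _" i] by (simp add: c_def)
    qed
  qed
  moreover have "\<delta> \<le> La"
  proof -
    obtain i where "b K = c K $ i" unfolding b_def using vmin_ex by blast
    then have "\<delta> \<le> b K" using K by (simp add: c_def)
    then show ?thesis using Lb(2)[rule_format, of K] eq by linarith
  qed
  ultimately show ?thesis by blast
qed

lemma consensus:
  fixes W :: "real^'n^'n"
  assumes s: "stoch W" and dg: "\<forall>i. 0 < W$i$i"
    and sc: "\<forall>i j. (\<lambda>u v. W$u$v > 0)\<^sup>*\<^sup>* i j"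
  shows "\<exists>\<pi>::real^'n. (\<forall>j. \<pi>$j > 0) \<and> \<pi> v* W = \<pi> \<and> sum (\<lambda>j. \<pi>$j) UNIV = 1 \<and>
            (\<lambda>k. matpow W k) \<longlonglongrightarrow> ones_outer \<pi>"
proof -
  have nn: "\<forall>i j. 0 \<le> W$i$j" using s by (simp add: stoch_def)
  have "\<forall>q::'n\<times>'n. \<exists>k. 0 < (matpow W k)$fst q$snd q"
    using pos_path[OF nn] sc by blast
  then obtain f where f: "\<forall>q::'n\<times>'n. 0 < (matpow W (f q))$fst q$snd q"
    using choice[OF \<open>\<forall>q. \<exists>k. _\<close>] by blast
  define K where "K = (\<Sum>q\<in>UNIV. f q)"
  have fK: "f q \<le> K" for q unfolding K_def by (rule member_le_sum) auto
  have PK: "0 < (matpow W K)$i$j" for i j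
    using pos_mono[OF nn dg _ fK[of "(i,j)"]] f by auto
  define \<delta> where "\<delta> = Min (range (\<lambda>q::'n\<times>'n. (matpow W K)$fst q$snd q))"
  have dle: "\<delta> \<le> (matpow W K)$i$j" for i j
    unfolding \<delta>_def by (rule Min_le) (auto intro: image_eqI[of _ _ "(i,j)"])
  have "\<delta> \<in> range (\<lambda>q::'n\<times>'n. (matpow W K)$fst q$snd q)"
    unfolding \<delta>_def by (rule Min_in) auto
  then have d0: "0 < \<delta>" using PK by auto
  have "\<forall>j. \<exists>L. \<delta> \<le> L \<and> (\<forall>i. (\<lambda>k. (matpow W k)$i$j) \<longlonglongrightarrow> L)"
    using column_limit[OF s _ d0] dle by blast
  from choice[OF this] obtain g where g: "\<forall>j. \<delta> \<le> g j \<and> (\<forall>i. (\<lambda>k. (matpow W k)$i$j) \<longlonglongrightarrow> g j)" by blast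
  define \<pi> where "\<pi> = (\<chi> j. g j)"
  have lim: "(\<lambda>k. (matpow W k)$i$j) \<longlonglongrightarrow> \<pi>$j" for i j using g by (simp add: \<pi>_def)
  have pos: "\<forall>j. \<pi>$j > 0" using g d0 by (auto simp: \<pi>_def intro: less_le_trans)
  have conv: "(\<lambda>k. matpow W k) \<longlonglongrightarrow> ones_outer \<pi>"
    by (intro vec_tendstoI) (simp add: ones_outer_def lim)
  fix i0 :: 'n
  have sum1: "sum (\<lambda>j. \<pi>$j) UNIV = 1"
  proof -
    have "(\<lambda>k. \<Sum>j\<in>UNIV. (matpow W k)$i0$j) \<longlonglongrightarrow> (\<Sum>j\<in>UNIV. \<pi>$j)"
      by (intro tendsto_sum lim)
    moreover have "(\<lambda>k. \<Sum>j\<in>UNIV. (matpow W k)$i0$j) = (\<lambda>k. 1)"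
      using stoch_matpow[OF s] by (simp add: stoch_def)
    ultimately have "(\<lambda>k. 1::real) \<longlonglongrightarrow> (\<Sum>j\<in>UNIV. \<pi>$j)" by simp
    then show ?thesis using LIMSEQ_unique[OF _ tendsto_const] by blast
  qed
  have eig: "\<pi> v* W = \<pi>"
  proof -
    have "(\<pi> v* W)$j = \<pi>$j" for j
    proof -
      have "(\<lambda>k. (matpow W (Suc k))$i0$j) \<longlonglongrightarrow> \<pi>$j"
        using lim by (rule LIMSEQ_Suc)
      moreover have "(\<lambda>k. (matpow W (Suc k))$i0$j) = (\<lambda>k. \<Sum>l\<in>UNIV. (matpow W k)$i0$l * W$l$j)"
      proof
        fix k
        have e: "matpow W (Suc k) = matpow W k ** W" by (rule matpow_Suc')
        show "(matpow W (Suc k))$i0$j = (\<Sum>l\<in>UNIV. (matpow W k)$i0$l * W$l$j)"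
          unfolding e by (simp add: matrix_matrix_mult_def del: matpow.simps)
      qed
      moreover have "(\<lambda>k. \<Sum>l\<in>UNIV. (matpow W k)$i0$l * W$l$j) \<longlonglongrightarrow> (\<Sum>l\<in>UNIV. \<pi>$l * W$l$j)"
        by (intro tendsto_sum tendsto_mult lim tendsto_const)
      ultimately have "\<pi>$j = (\<Sum>l\<in>UNIV. \<pi>$l * W$l$j)" using LIMSEQ_unique by auto
      then show ?thesis by (simp add: vector_matrix_mult_def)
    qed
    then show ?thesis by (simp add: vec_eq_iff)
  qed
  show ?thesis using pos eig sum1 conv by blast
qed



lemma matpow_entry_bound:
  fixes M :: "real^'n^'n"
  assumes B: "\<forall>i j. \<bar>M$i$j\<bar> \<le> B"
  shows "\<bar>(matpow M k)$u$v\<bar> \<le> (real CARD('n) * B)^k"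
proof (induction k arbitrary: u v)
  case 0 then show ?case by (simp add: mat_def)
next
  case (Suc k)
  have "\<bar>(matpow M (Suc k))$u$v\<bar> = \<bar>\<Sum>l\<in>UNIV. M$u$l * (matpow M k)$l$v\<bar>"
    by (simp add: matrix_matrix_mult_def)
  also have "\<dots> \<le> (\<Sum>l\<in>UNIV. \<bar>M$u$l * (matpow M k)$l$v\<bar>)" by (rule sum_abs)
  also have "\<dots> \<le> (\<Sum>l\<in>(UNIV::'n set). B * (real CARD('n) * B)^k)"
  proof (intro sum_mono)
    fix l :: 'n
    have B0: "0 \<le> B" using B abs_ge_zero order_trans by blast
    show "\<bar>M$u$l * (matpow M k)$l$v\<bar> \<le> B * (real CARD('n) * B)^k"
      unfolding abs_mult using B Suc B0 by (intro mult_mono) auto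
  qed
  also have "\<dots> = (real CARD('n) * B)^Suc k" by simp
  finally show ?case .
qed

definition mbound :: "real^'n^'n \<Rightarrow> real" where
  "mbound M = (\<Sum>i\<in>UNIV. \<Sum>j\<in>UNIV. \<bar>M$i$j\<bar>)"

lemma mbound: "\<bar>M$i$j\<bar> \<le> mbound M"
proof -
  have "\<bar>M$i$j\<bar> \<le> (\<Sum>j\<in>UNIV. \<bar>M$i$j\<bar>)" by (rule member_le_sum) auto
  also have "\<dots> \<le> mbound M" unfolding mbound_def
    by (rule member_le_sum[where f="\<lambda>i. \<Sum>j\<in>UNIV. \<bar>M$i$j\<bar>"]) (auto intro: sum_nonneg)
  finally show ?thesis .
qed

lemma entry_series_bound:
  fixes M :: "real^'n^'n"
  shows "\<bar>(1 / fact k) * (matpow M k)$u$v\<bar> \<le> inverse (fact k) * (real CARD('n) * mbound M)^k"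
  using matpow_entry_bound[of M "mbound M" k u v] mbound[of M]
  by (simp add: abs_mult divide_inverse mult_left_mono)

lemma entry_series_summable:
  fixes M :: "real^'n^'n"
  shows "summable (\<lambda>k. norm ((1 / fact k) * (matpow M k)$u$v))"
proof (rule summable_comparison_test[OF _ summable_exp[of "real CARD('n) * mbound M"]])
  show "\<exists>N. \<forall>k\<ge>N. norm (norm ((1 / fact k) * (matpow M k)$u$v)) \<le> inverse (fact k) * (real CARD('n) * mbound M)^k"
    using entry_series_bound[of _ M u v] by simp
qed

lemma mexp_summable:
  fixes M :: "real^'n^'n"
  shows "summable (\<lambda>k. (1 / fact k) *\<^sub>R matpow M k)"
proof (rule summable_comparison_test)
  let ?c = "real CARD('n) * mbound M"
  show "summable (\<lambda>k. (\<Sum>i\<in>(UNIV::'n set). \<Sum>j\<in>(UNIV::'n set). inverse (fact k) * ?c^k))"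
    by (intro summable_sum summable_exp)
  show "\<exists>N. \<forall>n\<ge>N. norm ((1 / fact n) *\<^sub>R matpow M n) \<le>
           (\<Sum>i\<in>(UNIV::'n set). \<Sum>j\<in>(UNIV::'n set). inverse (fact n) * ?c^n)"
  proof (intro exI allI impI)
    fix n :: nat
    have "norm ((1 / fact n) *\<^sub>R matpow M n) \<le> (\<Sum>i\<in>UNIV. norm (((1 / fact n) *\<^sub>R matpow M n)$i))"
      unfolding norm_vec_def by (rule L2_set_le_sum) simp
    also have "\<dots> \<le> (\<Sum>i\<in>UNIV. \<Sum>j\<in>UNIV. \<bar>((1 / fact n) *\<^sub>R matpow M n)$i$j\<bar>)"
      by (intro sum_mono norm_le_l1_cart)
    also have "\<dots> \<le> (\<Sum>i\<in>(UNIV::'n set). \<Sum>j\<in>(UNIV::'n set). inverse (fact n) * ?c^n)"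
      using entry_series_bound[of n M] by (intro sum_mono) auto
    finally show "norm ((1 / fact n) *\<^sub>R matpow M n) \<le>
           (\<Sum>i\<in>(UNIV::'n set). \<Sum>j\<in>(UNIV::'n set). inverse (fact n) * ?c^n)" .
  qed
qed

lemma mexp_entry:
  fixes M :: "real^'n^'n"
  shows "(mexp M)$u$v = (\<Sum>k. (1 / fact k) * (matpow M k)$u$v)"
proof -
  have s: "summable (\<lambda>k. (1 / fact k) *\<^sub>R matpow M k)" by (rule mexp_summable)
  have "(mexp M)$u = (\<Sum>k. ((1 / fact k) *\<^sub>R matpow M k)$u)"
    unfolding mexp_def by (rule bounded_linear.suminf[OF bounded_linear_vec_nth s])
  moreover have s2: "summable (\<lambda>k. ((1 / fact k) *\<^sub>R matpow M k)$u)"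
    by (rule bounded_linear.summable[OF bounded_linear_vec_nth s])
  ultimately have "(mexp M)$u$v = (\<Sum>k. ((1 / fact k) *\<^sub>R matpow M k)$u$v)"
    using bounded_linear.suminf[OF bounded_linear_vec_nth s2] by simp
  then show ?thesis by simp
qed



lemma binom_shift:
  fixes a :: real and z :: "nat \<Rightarrow> real"
  shows "(\<Sum>j\<le>Suc k. real (Suc k choose j) * a^(Suc k - j) * z j) =
         (\<Sum>j\<le>k. real (k choose j) * a^(k - j) * z (Suc j)) + a * (\<Sum>j\<le>k. real (k choose j) * a^(k - j) * z j)"
proof -
  have A: "(\<Sum>j\<le>Suc k. real (Suc k choose j) * a^(Suc k - j) * z j) =
     a^Suc k * z 0 + (\<Sum>j\<le>k. real (k choose j) * a^(k-j) * z (Suc j)) + (\<Sum>j\<le>k. real (k choose Suc j) * a^(k-j) * z (Suc j))"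
    by (simp add: sum.atMost_Suc_shift sum.distrib algebra_simps del: sum.atMost_Suc)
  have B: "a * (\<Sum>j\<le>k. real (k choose j) * a^(k - j) * z j) = (\<Sum>j\<le>Suc k. real (k choose j) * a^(Suc k - j) * z j)"
  proof -
    have "a * (\<Sum>j\<le>k. real (k choose j) * a^(k - j) * z j) = (\<Sum>j\<le>k. real (k choose j) * a^(Suc k - j) * z j)"
      unfolding sum_distrib_left by (intro sum.cong refl) (simp add: Suc_diff_le)
    then show ?thesis by simp
  qed
  have C: "(\<Sum>j\<le>Suc k. real (k choose j) * a^(Suc k - j) * z j) = a^Suc k * z 0 + (\<Sum>j\<le>k. real (k choose Suc j) * a^(k-j) * z (Suc j))"
    by (simp add: sum.atMost_Suc_shift del: sum.atMost_Suc)
  show ?thesis using A B C by simp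
qed

lemma matpow_shift_entry:
  fixes X :: "real^'n^'n"
  shows "(matpow (X + a *\<^sub>R mat 1) k)$u$v = (\<Sum>j\<le>k. real (k choose j) * a^(k - j) * (matpow X j)$u$v)"
proof (induction k arbitrary: u)
  case 0 then show ?case by simp
next
  case (Suc k)
  have "(matpow (X + a *\<^sub>R mat 1) (Suc k))$u$v =
        (\<Sum>l\<in>UNIV. X$u$l * (matpow (X + a *\<^sub>R mat 1) k)$l$v) + a * (matpow (X + a *\<^sub>R mat 1) k)$u$v"
  proof -
    let ?Y = "matpow (X + a *\<^sub>R mat 1) k"
    have e: "(X + a *\<^sub>R mat 1)$u$l = X$u$l + (if u = l then a else 0)" for l by (simp add: mat_def)
    have "(matpow (X + a *\<^sub>R mat 1) (Suc k))$u$v = (\<Sum>l\<in>UNIV. (X + a *\<^sub>R mat 1)$u$l * ?Y$l$v)"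
      by (simp only: matpow.simps) (simp only: matrix_matrix_mult_def vec_lambda_beta)
    also have "\<dots> = (\<Sum>l\<in>UNIV. X$u$l * ?Y$l$v) + (\<Sum>l\<in>UNIV. (if u = l then a * ?Y$l$v else 0))"
    proof -
      have "(X + a *\<^sub>R mat 1)$u$l * ?Y$l$v = X$u$l * ?Y$l$v + (if u = l then a * ?Y$l$v else 0)" for l
        unfolding e by (simp add: distrib_right)
      then show ?thesis by (simp only: sum.distrib)
    qed
    also have "(\<Sum>l\<in>UNIV. (if u = l then a * ?Y$l$v else 0)) = a * ?Y$u$v"
      by (simp add: sum.delta)
    finally show ?thesis .
  qed
  also have "(\<Sum>l\<in>UNIV. X$u$l * (matpow (X + a *\<^sub>R mat 1) k)$l$v) =
      (\<Sum>j\<le>k. real (k choose j) * a^(k - j) * (matpow X (Suc j))$u$v)"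
  proof -
    have "(\<Sum>l\<in>UNIV. X$u$l * (matpow (X + a *\<^sub>R mat 1) k)$l$v) =
       (\<Sum>l\<in>UNIV. \<Sum>j\<le>k. X$u$l * (real (k choose j) * a^(k - j) * (matpow X j)$l$v))"
      unfolding Suc.IH by (simp add: sum_distrib_left)
    also have "\<dots> = (\<Sum>j\<le>k. real (k choose j) * a^(k - j) * (\<Sum>l\<in>UNIV. X$u$l * (matpow X j)$l$v))"
      by (subst sum.swap) (simp add: sum_distrib_left algebra_simps)
    finally show ?thesis by (simp add: matrix_matrix_mult_def)
  qed
  finally show ?case unfolding Suc.IH binom_shift by simp
qed

lemma exp_series_real: "exp (a::real) = (\<Sum>i. a^i / fact i)"
  by (simp add: exp_def divide_inverse_commute scaleR_conv_of_real)

lemma mexp_shift_entry: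
  fixes X :: "real^'n^'n"
  shows "(mexp (X + a *\<^sub>R mat 1))$u$v = (\<Sum>j. (matpow X j)$u$v / fact j) * exp a"
proof -
  let ?z = "\<lambda>j. (matpow X j)$u$v / fact j"
  let ?b = "\<lambda>i. a^i / fact i"
  have s1: "summable (\<lambda>j. norm (?z j))"
    using entry_series_summable[of X u v] by (simp add: divide_inverse mult.commute)
  have s2: "summable (\<lambda>i. norm (?b i))"
    using summable_norm_exp[of a] by (simp add: divide_inverse mult.commute scaleR_conv_of_real)
  have "(\<Sum>j. ?z j) * exp a = (\<Sum>j. ?z j) * (\<Sum>i. ?b i)" by (simp add: exp_series_real)
  also have "\<dots> = (\<Sum>k. \<Sum>j\<le>k. ?z j * ?b (k - j))" by (rule Cauchy_product[OF s1 s2])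
  also have "\<dots> = (\<Sum>k. (1 / fact k) * (matpow (X + a *\<^sub>R mat 1) k)$u$v)"
  proof (intro suminf_cong)
    fix k
    have "(1 / fact k) * (matpow (X + a *\<^sub>R mat 1) k)$u$v =
        (\<Sum>j\<le>k. (1 / fact k) * (real (k choose j) * a^(k - j) * (matpow X j)$u$v))"
      unfolding matpow_shift_entry by (simp add: sum_distrib_left)
    also have "\<dots> = (\<Sum>j\<le>k. ?z j * ?b (k - j))"
    proof (intro sum.cong refl)
      fix j assume "j \<in> {..k}"
      then have jk: "j \<le> k" by simp
      show "(1 / fact k) * (real (k choose j) * a^(k - j) * (matpow X j)$u$v) = ?z j * ?b (k - j)"
        unfolding binomial_fact[OF jk, where 'a=real] by (simp add: field_simps)
    qed
    finally show "(\<Sum>j\<le>k. ?z j * ?b (k - j)) = (1 / fact k) * (matpow (X + a *\<^sub>R mat 1) k)$u$v" by simp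
  qed
  also have "\<dots> = (mexp (X + a *\<^sub>R mat 1))$u$v" by (simp add: mexp_entry)
  finally show ?thesis by simp
qed



lemma matpow_rowsum:
  fixes X :: "real^'n^'n"
  assumes rs: "\<forall>i. (\<Sum>j\<in>UNIV. X$i$j) = r"
  shows "(\<Sum>v\<in>UNIV. (matpow X k)$u$v) = r^k"
proof (induction k arbitrary: u)
  case 0 then show ?case by (simp add: mat_def)
next
  case (Suc k)
  have "(\<Sum>v\<in>UNIV. (matpow X (Suc k))$u$v) = (\<Sum>l\<in>UNIV. X$u$l * (\<Sum>v\<in>UNIV. (matpow X k)$l$v))"
    by (simp add: matrix_matrix_mult_def sum_distrib_left) (rule sum.swap)
  also have "\<dots> = r^Suc k" using rs by (simp add: Suc.IH sum_distrib_right[symmetric])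
  finally show ?case .
qed

lemma entry_summable2:
  fixes X :: "real^'n^'n"
  shows "summable (\<lambda>j. (matpow X j)$u$v / fact j)"
  using summable_norm_cancel[OF entry_series_summable[of X u v]] by (simp add: divide_inverse mult.commute)

lemma mexp_props:
  fixes X :: "real^'n^'n"
  assumes nn: "\<forall>i j. 0 \<le> X$i$j" and rs: "\<forall>i. (\<Sum>j\<in>UNIV. X$i$j) = r"
  shows "stoch (mexp (X + (-r) *\<^sub>R mat 1))"
    and "exp (-r) \<le> (mexp (X + (-r) *\<^sub>R mat 1))$u$u"
    and "exp (-r) * X$u$v \<le> (mexp (X + (-r) *\<^sub>R mat 1))$u$v"
proof -
  let ?E = "mexp (X + (-r) *\<^sub>R mat 1)"
  let ?S = "\<lambda>u v. (\<Sum>j. (matpow X j)$u$v / fact j)"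
  have E: "?E$u$v = ?S u v * exp (-r)" for u v by (rule mexp_shift_entry)
  have tnn: "0 \<le> (matpow X j)$u$v / fact j" for j u v
    using nonneg_matpow[OF nn] by simp
  have Snn: "0 \<le> ?S u v" for u v
    by (intro suminf_nonneg entry_summable2 tnn)
  have "(\<Sum>j\<in>{0}. (matpow X j)$u$u / fact j) \<le> ?S u u"
    by (intro sum_le_suminf entry_summable2 tnn) auto
  then have "1 \<le> ?S u u" by (simp add: mat_def)
  then show "exp (-r) \<le> ?E$u$u" unfolding E by simp
  have "(\<Sum>j\<in>{1}. (matpow X j)$u$v / fact j) \<le> ?S u v"
    by (intro sum_le_suminf entry_summable2 tnn) auto
  then have "X$u$v \<le> ?S u v" by (simp add: matrix_mul_rid)
  then show "exp (-r) * X$u$v \<le> ?E$u$v" unfolding E by simp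
  have rows: "(\<Sum>v\<in>UNIV. ?E$u$v) = 1" for u
  proof -
    have "(\<Sum>v\<in>UNIV. ?S u v) = (\<Sum>j. \<Sum>v\<in>UNIV. (matpow X j)$u$v / fact j)"
      by (rule suminf_sum[symmetric]) (rule entry_summable2)
    also have "\<dots> = (\<Sum>j. r^j / fact j)"
      using matpow_rowsum[OF rs] by (simp add: sum_divide_distrib[symmetric])
    also have "\<dots> = exp r" by (simp add: exp_series_real)
    finally have "(\<Sum>v\<in>UNIV. ?S u v) = exp r" .
    then show ?thesis unfolding E by (simp add: sum_distrib_right[symmetric] exp_minus)
  qed
  show "stoch ?E" unfolding stoch_def using rows Snn E by simp
qed



lemma comb_entry: "(\<Sum>i\<in>I. p i *\<^sub>R (\<Phi> i :: real^'n^'n))$u$v = (\<Sum>i\<in>I. p i * \<Phi> i$u$v)"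
  by (simp add: sum_component)

lemma final_W:
  fixes \<Phi> :: "nat \<Rightarrow> real^'n^'n" and A :: "real^'n^'n"
  assumes st: "\<forall>i\<in>{1..4}. stoch (\<Phi> i)"
    and p_pos: "\<forall>i\<in>{1..4}. 0 < p i \<and> p i < 1" and p_sum: "(\<Sum>i=1..4. p i) = 1"
    and dg: "\<forall>u. 0 < \<Phi> 4$u$u" and ed: "\<forall>u v. 0 < A$u$v \<longrightarrow> 0 < \<Phi> 4$u$v"
    and conn: "strongly_connected A"
  shows "\<exists>\<pi>::real^'n. (\<forall>j. \<pi>$j > 0) \<and> \<pi> v* (\<Sum>i=1..4. p i *\<^sub>R \<Phi> i) = \<pi> \<and> sum (\<lambda>j. \<pi>$j) UNIV = 1 \<and>
            (\<lambda>k. matpow (\<Sum>i=1..4. p i *\<^sub>R \<Phi> i) k) \<longlonglongrightarrow> ones_outer \<pi>"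
proof (rule consensus)
  let ?W = "\<Sum>i=1..4. p i *\<^sub>R \<Phi> i"
  show sW: "stoch ?W" using st p_pos p_sum by (intro stoch_comb) auto
  have ge: "p 4 * \<Phi> 4$u$v \<le> ?W$u$v" for u v
    unfolding comb_entry
  proof (rule member_le_sum[where f="\<lambda>i. p i * \<Phi> i$u$v"])
    fix x :: nat assume x: "x \<in> {1..4} - {4}"
    then have "0 \<le> p x" using p_pos by (auto intro: less_imp_le)
    moreover have "0 \<le> \<Phi> x$u$v" using st x by (auto simp: stoch_def)
    ultimately show "0 \<le> p x * \<Phi> x$u$v" by simp
  qed auto
  have p4: "0 < p 4" using p_pos by auto
  show "\<forall>i. 0 < ?W$i$i" using ge dg p4 by (meson less_le_trans mult_pos_pos)
  show "\<forall>i j. (\<lambda>u v. 0 < ?W$u$v)\<^sup>*\<^sup>* i j"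
  proof (intro allI)
    fix i j
    have "(\<lambda>u v. 0 < A$u$v)\<^sup>*\<^sup>* i j" using conn by (simp add: strongly_connected_def)
    then show "(\<lambda>u v. 0 < ?W$u$v)\<^sup>*\<^sup>* i j"
    proof (rule rtranclp_mono[THEN predicate2D, rotated])
      show "(\<lambda>u v. 0 < A$u$v) \<le> (\<lambda>u v. 0 < ?W$u$v)"
      proof (intro le_funI le_boolI)
        fix u v assume "0 < A$u$v"
        then have "0 < p 4 * \<Phi> 4$u$v" using ed p4 by simp
        then show "0 < ?W$u$v" using ge[of u v] by linarith
      qed
    qed
  qed
qed

lemma switch_entry:
  "\<exists>c. (switch_adj sc a1 a2 A i)$u$v = (if c then 0 else A$u$v)"
  unfolding switch_adj_def Let_def zero_rows_def zero_cols_def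
  by (cases sc) auto

lemma switch_4: "switch_adj sc a1 a2 A 4 = A"
  unfolding switch_adj_def by simp

lemma lap_entry: "(laplacian B)$u$v = (if u = v then (\<Sum>k\<in>UNIV. B$u$k) else 0) - B$u$v"
  by (simp add: laplacian_def)

lemma lap_rowsum: "(\<Sum>v\<in>UNIV. (laplacian B)$u$v) = 0"
proof -
  have "(\<Sum>v\<in>UNIV. (laplacian B)$u$v) = (\<Sum>v\<in>UNIV. (if u = v then (\<Sum>k\<in>UNIV. B$u$k) else 0)) - (\<Sum>v\<in>UNIV. B$u$v)"
    unfolding lap_entry by (rule sum_subtractf)
  also have "(\<Sum>v\<in>UNIV. (if u = v then (\<Sum>k\<in>UNIV. B$u$k) else 0)) = (\<Sum>k\<in>UNIV. B$u$k)"
    by simp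
  finally show ?thesis by simp
qed

context
  fixes B :: "real^'n^'n" and c :: real
  assumes Bnn: "\<forall>u v. 0 \<le> B$u$v" and Bdg: "\<forall>u. B$u$u = 0"
    and Bdeg: "\<forall>u. (\<Sum>v\<in>UNIV. B$u$v) \<le> c"
begin

lemma step_entry: "(mat 1 - h *\<^sub>R laplacian B)$u$v =
   (if u = v then 1 - h * (\<Sum>k\<in>UNIV. B$u$k) else h * B$u$v)"
  using Bdg by (auto simp: lap_entry mat_def)

lemma step_stoch:
  assumes "0 < h" "h * c < 1"
  shows "stoch (mat 1 - h *\<^sub>R laplacian B)" "\<forall>u. 0 < (mat 1 - h *\<^sub>R laplacian B)$u$u"
proof -
  have d: "0 < 1 - h * (\<Sum>k\<in>UNIV. B$u$k)" for u
  proof -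
    have "h * (\<Sum>k\<in>UNIV. B$u$k) \<le> h * c" using Bdeg assms by (intro mult_left_mono) auto
    then show ?thesis using assms by linarith
  qed
  show "\<forall>u. 0 < (mat 1 - h *\<^sub>R laplacian B)$u$u"
  proof
    fix u show "0 < (mat 1 - h *\<^sub>R laplacian B)$u$u" unfolding step_entry using d[of u] by simp
  qed
  have "0 \<le> (mat 1 - h *\<^sub>R laplacian B)$u$v" for u v
    unfolding step_entry using d[of u] Bnn assms by (auto simp: less_imp_le)
  moreover have "(\<Sum>v\<in>UNIV. (mat 1 - h *\<^sub>R laplacian B)$u$v) = 1" for u
  proof -
    have "(\<Sum>v\<in>UNIV. (mat 1 - h *\<^sub>R laplacian B)$u$v) = (\<Sum>v\<in>UNIV. (mat 1::real^'n^'n)$u$v) - h * (\<Sum>v\<in>UNIV. (laplacian B)$u$v)"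
      by (simp add: sum_subtractf sum_distrib_left)
    then show ?thesis using lap_rowsum[of B u] by (simp add: mat_def)
  qed
  ultimately show "stoch (mat 1 - h *\<^sub>R laplacian B)" by (simp add: stoch_def)
qed

lemma gen_entry: "(t *\<^sub>R (c *\<^sub>R mat 1 - laplacian B))$u$v =
   (if u = v then t * (c - (\<Sum>k\<in>UNIV. B$u$k)) else t * B$u$v)"
  using Bdg by (auto simp: lap_entry mat_def algebra_simps)

lemma gen_nonneg: "0 \<le> t \<Longrightarrow> \<forall>u v. 0 \<le> (t *\<^sub>R (c *\<^sub>R mat 1 - laplacian B))$u$v"
proof (intro allI)
  fix u v assume t: "0 \<le> t"
  have "B$u$u \<le> (\<Sum>k\<in>UNIV. B$u$k)" using Bnn by (intro member_le_sum) auto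
  then show "0 \<le> (t *\<^sub>R (c *\<^sub>R mat 1 - laplacian B))$u$v"
    unfolding gen_entry using Bnn Bdeg[rule_format, of u] t by auto
qed

lemma gen_rowsum: "\<forall>u. (\<Sum>v\<in>UNIV. (t *\<^sub>R (c *\<^sub>R mat 1 - laplacian B))$u$v) = t * c"
proof
  fix u
  have "(\<Sum>v\<in>UNIV. (t *\<^sub>R (c *\<^sub>R mat 1 - laplacian B))$u$v) =
     t * ((\<Sum>v\<in>UNIV. c * (mat 1 :: real^'n^'n)$u$v) - (\<Sum>v\<in>UNIV. (laplacian B)$u$v))"
    by (simp add: sum_subtractf sum_distrib_left right_diff_distrib)
  also have "(\<Sum>v\<in>UNIV. c * (mat 1 :: real^'n^'n)$u$v) = c"
    by (simp add: mat_def if_distrib cong: if_cong)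
  finally show "(\<Sum>v\<in>UNIV. (t *\<^sub>R (c *\<^sub>R mat 1 - laplacian B))$u$v) = t * c"
    using lap_rowsum[of B u] by simp
qed

lemma gen_eq: "(- t) *\<^sub>R laplacian B = t *\<^sub>R (c *\<^sub>R mat 1 - laplacian B) + (-(t*c)) *\<^sub>R mat 1"
  by (simp add: algebra_simps)

end



lemma mv_sum: "(\<Sum>i\<in>I. c i *\<^sub>R ((\<Phi> i :: real^'n^'n) *v y)) = (\<Sum>i\<in>I. c i *\<^sub>R \<Phi> i) *v y"
unfolding vec_eq_iff proof (intro allI)
  fix u
  show "(\<Sum>i\<in>I. c i *\<^sub>R ((\<Phi> i :: real^'n^'n) *v y))$u = ((\<Sum>i\<in>I. c i *\<^sub>R \<Phi> i) *v y)$u"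
    apply (simp add: matrix_vector_mult_def sum_component sum_distrib_left sum_distrib_right mult.assoc)
    apply (rule sum.swap)
    done
qed

context prob_space begin

context
  fixes \<sigma> :: "nat \<Rightarrow> 'a \<Rightarrow> nat" and p :: "nat \<Rightarrow> real"
  assumes rv: "\<forall>k. \<sigma> k \<in> M \<rightarrow>\<^sub>M count_space UNIV"
    and rng: "\<forall>k. \<forall>\<omega>\<in>space M. \<sigma> k \<omega> \<in> {1..4}"
    and dst: "\<forall>k. \<forall>i\<in>{1..4}. measure M {\<omega>\<in>space M. \<sigma> k \<omega> = i} = p i"
    and ind: "indep_vars (\<lambda>_. count_space UNIV) \<sigma> UNIV"
begin

lemma ev_eq: "{\<omega>\<in>space M. \<sigma> k \<omega> = i} = \<sigma> k -` {i} \<inter> space M" by auto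

lemma ev_sets: "{\<omega>\<in>space M. \<sigma> k \<omega> = i} \<in> events"
  unfolding ev_eq by (rule measurable_sets[OF rv[rule_format]]) auto

definition Bset :: "nat set \<Rightarrow> (nat \<Rightarrow> nat) \<Rightarrow> 'a set" where
  "Bset J t = {\<omega>\<in>space M. \<forall>j\<in>J. \<sigma> j \<omega> = t j}"

lemma Bset_sets: "finite J \<Longrightarrow> Bset J t \<in> events"
proof (induction J rule: finite_induct)
  case empty then show ?case by (simp add: Bset_def)
next
  case (insert x F)
  have "Bset (insert x F) t = Bset F t \<inter> {\<omega>\<in>space M. \<sigma> x \<omega> = t x}" by (auto simp: Bset_def)
  then show ?case using insert ev_sets by auto
qed

lemma Bset_prob: "finite J \<Longrightarrow> prob (Bset J t) = (\<Prod>j\<in>J. prob {\<omega>\<in>space M. \<sigma> j \<omega> = t j})"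
proof (cases "J = {}")
  case True then show ?thesis by (simp add: Bset_def prob_space)
next
  case False
  assume fin: "finite J"
  have "prob (\<Inter>j\<in>J. \<sigma> j -` {t j} \<inter> space M) = (\<Prod>j\<in>J. prob (\<sigma> j -` {t j} \<inter> space M))"
    by (rule indep_varsD[OF ind False fin]) auto
  moreover have "(\<Inter>j\<in>J. \<sigma> j -` {t j} \<inter> space M) = Bset J t" using False by (auto simp: Bset_def)
  ultimately show ?thesis by (simp add: ev_eq)
qed

lemma decomp:
  fixes f :: "nat \<Rightarrow> 'b::real_vector"
  assumes "\<omega> \<in> space M"
  shows "f (\<sigma> k \<omega>) = (\<Sum>i\<in>{1..4}. indicator {\<omega>\<in>space M. \<sigma> k \<omega> = i} \<omega> *\<^sub>R f i)"
proof -
  have "(\<Sum>i\<in>{1..4}. indicator {\<omega>\<in>space M. \<sigma> k \<omega> = i} \<omega> *\<^sub>R f i) = (\<Sum>i\<in>{1..4}. if \<sigma> k \<omega> = i then f i else 0)"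
    using assms by (intro sum.cong) (auto simp: indicator_def)
  also have "\<dots> = f (\<sigma> k \<omega>)" using rng assms by (simp add: sum.delta)
  finally show ?thesis by simp
qed

lemma int_ind_const:
  fixes c :: "'b::{banach,second_countable_topology}"
  assumes S: "S \<in> events"
  shows "integrable M (\<lambda>\<omega>. indicator S \<omega> *\<^sub>R c)"
    and "integral\<^sup>L M (\<lambda>\<omega>. indicator S \<omega> *\<^sub>R c) = prob S *\<^sub>R c"
proof -
  have i: "integrable M (indicator S :: 'a \<Rightarrow> real)"
    using S by (intro integrable_real_indicator) (simp_all add: emeasure_eq_measure)
  then show "integrable M (\<lambda>\<omega>. indicator S \<omega> *\<^sub>R c)" by (intro integrable_scaleR_left)
  have "integral\<^sup>L M (\<lambda>\<omega>. indicator S \<omega> *\<^sub>R c) = integral\<^sup>L M (indicator S) *\<^sub>R c"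
    using i by (intro integral_scaleR_left)
  also have "integral\<^sup>L M (indicator S :: 'a \<Rightarrow> real) = prob S"
    using S sets.sets_into_space by (simp add: Int_absorb2)
  finally show "integral\<^sup>L M (\<lambda>\<omega>. indicator S \<omega> *\<^sub>R c) = prob S *\<^sub>R c" .
qed

lemma expect_phi:
  fixes \<Phi> :: "nat \<Rightarrow> real^'n^'n"
  shows "integral\<^sup>L M (\<lambda>\<omega>. \<Phi> (\<sigma> k \<omega>)) = (\<Sum>i=1..4. p i *\<^sub>R \<Phi> i)"
proof -
  have "integral\<^sup>L M (\<lambda>\<omega>. \<Phi> (\<sigma> k \<omega>)) =
      integral\<^sup>L M (\<lambda>\<omega>. \<Sum>i\<in>{1..4}. indicator {\<omega>\<in>space M. \<sigma> k \<omega> = i} \<omega> *\<^sub>R \<Phi> i)"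
    using decomp[where f=\<Phi> and k=k] by (intro Bochner_Integration.integral_cong) auto
  also have "\<dots> = (\<Sum>i\<in>{1..4}. measure M {\<omega>\<in>space M. \<sigma> k \<omega> = i} *\<^sub>R \<Phi> i)"
  proof -
    have "integral\<^sup>L M (\<lambda>\<omega>. \<Sum>i\<in>{1..4}. indicator {\<omega>\<in>space M. \<sigma> k \<omega> = i} \<omega> *\<^sub>R \<Phi> i) =
       (\<Sum>i\<in>{1..4}. integral\<^sup>L M (\<lambda>\<omega>. indicator {\<omega>\<in>space M. \<sigma> k \<omega> = i} \<omega> *\<^sub>R \<Phi> i))"
      by (rule Bochner_Integration.integral_sum) (rule int_ind_const(1)[OF ev_sets])
    also have "\<dots> = (\<Sum>i\<in>{1..4}. measure M {\<omega>\<in>space M. \<sigma> k \<omega> = i} *\<^sub>R \<Phi> i)"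
      by (intro sum.cong refl int_ind_const(2)[OF ev_sets])
    finally show ?thesis .
  qed
  also have "\<dots> = (\<Sum>i=1..4. p i *\<^sub>R \<Phi> i)" using dst by (intro sum.cong) auto
  finally show ?thesis .
qed

lemma traj_decomp:
  fixes \<Phi> :: "nat \<Rightarrow> real^'n^'n"
  assumes "\<omega> \<in> space M"
  shows "traj \<Phi> \<sigma> x0 (Suc k) \<omega> = (\<Sum>i\<in>{1..4}. indicator {\<omega>\<in>space M. \<sigma> k \<omega> = i} \<omega> *\<^sub>R (\<Phi> i *v traj \<Phi> \<sigma> x0 k \<omega>))"
  using decomp[OF assms, of "\<lambda>i. \<Phi> i *v traj \<Phi> \<sigma> x0 k \<omega>" k] by simp

lemma traj_integrable:
  fixes \<Phi> :: "nat \<Rightarrow> real^'n^'n"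
  shows "integrable M (traj \<Phi> \<sigma> x0 k)"
proof (induction k)
  case 0 then show ?case by simp
next
  case (Suc k)
  have "integrable M (\<lambda>\<omega>. \<Sum>i\<in>{1..4}. indicator {\<omega>\<in>space M. \<sigma> k \<omega> = i} \<omega> *\<^sub>R (\<Phi> i *v traj \<Phi> \<sigma> x0 k \<omega>))"
  proof (intro Bochner_Integration.integrable_sum)
    fix i
    show "integrable M (\<lambda>\<omega>. indicator {\<omega>\<in>space M. \<sigma> k \<omega> = i} \<omega> *\<^sub>R (\<Phi> i *v traj \<Phi> \<sigma> x0 k \<omega>))"
      by (rule integrable_mult_indicator[OF ev_sets])
         (rule integrable_bounded_linear[OF matrix_vector_mul_bounded_linear Suc])
  qed
  then show ?case by (subst Bochner_Integration.integrable_cong[OF refl traj_decomp]) auto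
qed

lemma traj_expect_gen:
  fixes \<Phi> :: "nat \<Rightarrow> real^'n^'n"
  defines "W \<equiv> (\<Sum>i=1..4. p i *\<^sub>R \<Phi> i)"
  shows "finite J \<Longrightarrow> (\<forall>j\<in>J. k \<le> j) \<Longrightarrow>
    integral\<^sup>L M (\<lambda>\<omega>. indicator (Bset J t) \<omega> *\<^sub>R traj \<Phi> \<sigma> x0 k \<omega>) =
    (\<Prod>j\<in>J. prob {\<omega>\<in>space M. \<sigma> j \<omega> = t j}) *\<^sub>R (matpow W k *v x0)"
proof (induction k arbitrary: J t)
  case 0
  have "integral\<^sup>L M (\<lambda>\<omega>. indicator (Bset J t) \<omega> *\<^sub>R x0) = integral\<^sup>L M (indicator (Bset J t)) *\<^sub>R x0"
    using Bset_sets[OF 0(1)] by (intro integral_scaleR_left integrable_real_indicator) (simp_all add: emeasure_eq_measure)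
  also have "integral\<^sup>L M (indicator (Bset J t)) = prob (Bset J t)"
    using Bset_sets[OF 0(1)] by (simp add: Bset_def Int_absorb2)
  finally show ?case using Bset_prob[OF 0(1)] by simp
next
  case (Suc k)
  let ?T = "traj \<Phi> \<sigma> x0 k"
  have kJ: "k \<notin> J" using Suc.prems by auto
  have fin': "finite (insert k J)" using Suc.prems by simp
  have ge': "\<forall>j\<in>insert k J. k \<le> j" using Suc.prems by auto
  have ind_eq: "indicator (Bset J t) \<omega> * indicator {\<omega>\<in>space M. \<sigma> k \<omega> = i} \<omega> =
      (indicator (Bset (insert k J) (t(k:=i))) \<omega> :: real)" for \<omega> i
    using kJ by (auto simp: indicator_def Bset_def)
  have "integral\<^sup>L M (\<lambda>\<omega>. indicator (Bset J t) \<omega> *\<^sub>R traj \<Phi> \<sigma> x0 (Suc k) \<omega>) =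
      integral\<^sup>L M (\<lambda>\<omega>. \<Sum>i\<in>{1..4}. \<Phi> i *v (indicator (Bset (insert k J) (t(k:=i))) \<omega> *\<^sub>R ?T \<omega>))"
  proof (intro Bochner_Integration.integral_cong refl)
    fix \<omega> assume w: "\<omega> \<in> space M"
    show "indicator (Bset J t) \<omega> *\<^sub>R traj \<Phi> \<sigma> x0 (Suc k) \<omega> =
       (\<Sum>i\<in>{1..4}. \<Phi> i *v (indicator (Bset (insert k J) (t(k:=i))) \<omega> *\<^sub>R ?T \<omega>))"
      unfolding traj_decomp[OF w] scaleR_sum_right ind_eq[symmetric]
      by (intro sum.cong refl) (simp add: matrix_vector_mult_scaleR scaleR_scaleR)
  qed
  also have "\<dots> = (\<Sum>i\<in>{1..4}. \<Phi> i *v integral\<^sup>L M (\<lambda>\<omega>. indicator (Bset (insert k J) (t(k:=i))) \<omega> *\<^sub>R ?T \<omega>))"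
  proof -
    have int: "integrable M (\<lambda>\<omega>. indicator (Bset (insert k J) (t(k:=i))) \<omega> *\<^sub>R ?T \<omega>)" for i
      using Bset_sets[OF fin'] traj_integrable by (intro integrable_mult_indicator) auto
    have "integral\<^sup>L M (\<lambda>\<omega>. \<Sum>i\<in>{1..4}. \<Phi> i *v (indicator (Bset (insert k J) (t(k:=i))) \<omega> *\<^sub>R ?T \<omega>)) =
      (\<Sum>i\<in>{1..4}. integral\<^sup>L M (\<lambda>\<omega>. \<Phi> i *v (indicator (Bset (insert k J) (t(k:=i))) \<omega> *\<^sub>R ?T \<omega>)))"
      by (rule Bochner_Integration.integral_sum)
         (rule integrable_bounded_linear[OF matrix_vector_mul_bounded_linear int])
    also have "\<dots> = (\<Sum>i\<in>{1..4}. \<Phi> i *v integral\<^sup>L M (\<lambda>\<omega>. indicator (Bset (insert k J) (t(k:=i))) \<omega> *\<^sub>R ?T \<omega>))"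
      by (intro sum.cong refl integral_bounded_linear[OF matrix_vector_mul_bounded_linear int])
    finally show ?thesis .
  qed
  also have "\<dots> = (\<Sum>i\<in>{1..4}. \<Phi> i *v ((\<Prod>j\<in>insert k J. prob {\<omega>\<in>space M. \<sigma> j \<omega> = (t(k:=i)) j}) *\<^sub>R (matpow W k *v x0)))"
    using Suc.IH[OF fin' ge'] by simp
  also have "\<dots> = (\<Sum>i\<in>{1..4}. (p i * (\<Prod>j\<in>J. prob {\<omega>\<in>space M. \<sigma> j \<omega> = t j})) *\<^sub>R (\<Phi> i *v (matpow W k *v x0)))"
  proof (intro sum.cong refl)
    fix i :: nat assume i: "i \<in> {1..4}"
    have "(\<Prod>j\<in>insert k J. prob {\<omega>\<in>space M. \<sigma> j \<omega> = (t(k:=i)) j}) =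
        prob {\<omega>\<in>space M. \<sigma> k \<omega> = i} * (\<Prod>j\<in>J. prob {\<omega>\<in>space M. \<sigma> j \<omega> = (t(k:=i)) j})"
      using Suc.prems kJ by simp
    also have "(\<Prod>j\<in>J. prob {\<omega>\<in>space M. \<sigma> j \<omega> = (t(k:=i)) j}) = (\<Prod>j\<in>J. prob {\<omega>\<in>space M. \<sigma> j \<omega> = t j})"
      using kJ by (intro prod.cong refl) auto
    also have "prob {\<omega>\<in>space M. \<sigma> k \<omega> = i} = p i" using dst i by auto
    finally show "\<Phi> i *v ((\<Prod>j\<in>insert k J. prob {\<omega>\<in>space M. \<sigma> j \<omega> = (t(k:=i)) j}) *\<^sub>R (matpow W k *v x0)) =
       (p i * (\<Prod>j\<in>J. prob {\<omega>\<in>space M. \<sigma> j \<omega> = t j})) *\<^sub>R (\<Phi> i *v (matpow W k *v x0))"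
      by (simp add: matrix_vector_mult_scaleR)
  qed
  also have "\<dots> = (\<Prod>j\<in>J. prob {\<omega>\<in>space M. \<sigma> j \<omega> = t j}) *\<^sub>R (W *v (matpow W k *v x0))"
    unfolding W_def mv_sum[symmetric] scaleR_sum_right by (intro sum.cong refl) (simp add: algebra_simps)
  also have "\<dots> = (\<Prod>j\<in>J. prob {\<omega>\<in>space M. \<sigma> j \<omega> = t j}) *\<^sub>R (matpow W (Suc k) *v x0)"
    by (simp add: matrix_vector_mul_assoc)
  finally show ?case .
qed

lemma traj_expect:
  fixes \<Phi> :: "nat \<Rightarrow> real^'n^'n"
  shows "integral\<^sup>L M (traj \<Phi> \<sigma> x0 k) = matpow (\<Sum>i=1..4. p i *\<^sub>R \<Phi> i) k *v x0"
proof -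
  have "integral\<^sup>L M (traj \<Phi> \<sigma> x0 k) = integral\<^sup>L M (\<lambda>\<omega>. indicator (Bset {} (\<lambda>_. 0)) \<omega> *\<^sub>R traj \<Phi> \<sigma> x0 k \<omega>)"
    by (intro Bochner_Integration.integral_cong) (auto simp: Bset_def indicator_def)
  also have "\<dots> = matpow (\<Sum>i=1..4. p i *\<^sub>R \<Phi> i) k *v x0"
    using traj_expect_gen[of "{}" k "\<lambda>_. 0" \<Phi> x0] by simp
  finally show ?thesis .
qed

end
end



lemma mv_tendsto:
  fixes f :: "nat \<Rightarrow> real^'n^'m"
  assumes "f \<longlonglongrightarrow> A"
  shows "(\<lambda>k. f k *v x) \<longlonglongrightarrow> A *v x"
proof (intro vec_tendstoI)
  fix i
  show "(\<lambda>k. (f k *v x)$i) \<longlonglongrightarrow> (A *v x)$i"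
    unfolding matrix_vector_mult_def vec_lambda_beta
    by (intro tendsto_sum tendsto_mult tendsto_const tendsto_vec_nth assms)
qed

lemma part_generic:
  fixes M :: "'w measure" and \<sigma> :: "nat \<Rightarrow> 'w \<Rightarrow> nat" and \<Phi> :: "nat \<Rightarrow> real^'n^'n"
    and A :: "real^'n^'n" and p :: "nat \<Rightarrow> real"
  assumes M: "prob_space M"
    and \<sigma>_rv: "\<forall>k. \<sigma> k \<in> M \<rightarrow>\<^sub>M count_space UNIV"
    and \<sigma>_range: "\<forall>k. \<forall>\<omega>\<in>space M. \<sigma> k \<omega> \<in> {1..4}"
    and \<sigma>_dist: "\<forall>k. \<forall>i\<in>{1..4}. measure M {\<omega>\<in>space M. \<sigma> k \<omega> = i} = p i"
    and \<sigma>_indep: "prob_space.indep_vars M (\<lambda>_. count_space UNIV) \<sigma> UNIV"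
    and st: "\<forall>i\<in>{1..4}. stoch (\<Phi> i)"
    and p_pos: "\<forall>i\<in>{1..4}. 0 < p i \<and> p i < 1" and p_sum: "(\<Sum>i=1..4. p i) = 1"
    and dg: "\<forall>u. 0 < \<Phi> 4$u$u" and ed: "\<forall>u v. 0 < A$u$v \<longrightarrow> 0 < \<Phi> 4$u$v"
    and conn: "strongly_connected A"
  shows "(\<forall>k. integral\<^sup>L M (\<lambda>\<omega>. \<Phi> (\<sigma> k \<omega>)) = (\<Sum>i=1..4. p i *\<^sub>R \<Phi> i)) \<and>
         (\<exists>\<pi>::real^'n. (\<forall>j. \<pi>$j > 0) \<and> \<pi> v* (\<Sum>i=1..4. p i *\<^sub>R \<Phi> i) = \<pi> \<and> sum (\<lambda>j. \<pi>$j) UNIV = 1 \<and>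
            (\<lambda>k. matpow (\<Sum>i=1..4. p i *\<^sub>R \<Phi> i) k) \<longlonglongrightarrow> ones_outer \<pi> \<and>
            (\<forall>x0. (\<lambda>k. integral\<^sup>L M (traj \<Phi> \<sigma> x0 k)) \<longlonglongrightarrow> ones_outer \<pi> *v x0))"
proof
  show "\<forall>k. integral\<^sup>L M (\<lambda>\<omega>. \<Phi> (\<sigma> k \<omega>)) = (\<Sum>i=1..4. p i *\<^sub>R \<Phi> i)"
    using prob_space.expect_phi[OF M \<sigma>_rv \<sigma>_range \<sigma>_dist \<sigma>_indep] by blast
  obtain \<pi> :: "real^'n" where \<pi>: "(\<forall>j. \<pi>$j > 0)" "\<pi> v* (\<Sum>i=1..4. p i *\<^sub>R \<Phi> i) = \<pi>"
      "sum (\<lambda>j. \<pi>$j) UNIV = 1" "(\<lambda>k. matpow (\<Sum>i=1..4. p i *\<^sub>R \<Phi> i) k) \<longlonglongrightarrow> ones_outer \<pi>"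
    using final_W[OF st p_pos p_sum dg ed conn] by blast
  have "\<forall>x0. (\<lambda>k. integral\<^sup>L M (traj \<Phi> \<sigma> x0 k)) \<longlonglongrightarrow> ones_outer \<pi> *v x0"
  proof
    fix x0
    show "(\<lambda>k. integral\<^sup>L M (traj \<Phi> \<sigma> x0 k)) \<longlonglongrightarrow> ones_outer \<pi> *v x0"
      unfolding prob_space.traj_expect[OF M \<sigma>_rv \<sigma>_range \<sigma>_dist \<sigma>_indep]
      by (rule mv_tendsto[OF \<pi>(4)])
  qed
  with \<pi> show "\<exists>\<pi>::real^'n. (\<forall>j. \<pi>$j > 0) \<and> \<pi> v* (\<Sum>i=1..4. p i *\<^sub>R \<Phi> i) = \<pi> \<and> sum (\<lambda>j. \<pi>$j) UNIV = 1 \<and>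
            (\<lambda>k. matpow (\<Sum>i=1..4. p i *\<^sub>R \<Phi> i) k) \<longlonglongrightarrow> ones_outer \<pi> \<and>
            (\<forall>x0. (\<lambda>k. integral\<^sup>L M (traj \<Phi> \<sigma> x0 k)) \<longlonglongrightarrow> ones_outer \<pi> *v x0)" by blast
qed

lemma sw_props:
  fixes A :: "real^'n^'n"
  assumes g: "simple_graph_adj A"
  shows "\<forall>u v. 0 \<le> (switch_adj sc a1 a2 A i)$u$v"
    and "\<forall>u. (switch_adj sc a1 a2 A i)$u$u = 0"
    and "\<forall>u. (\<Sum>v\<in>UNIV. (switch_adj sc a1 a2 A i)$u$v) \<le> dmax A"
proof -
  have A01: "A$u$v = 0 \<or> A$u$v = 1" for u v using g by (simp add: simple_graph_adj_def)
  have Ad: "A$u$u = 0" for u using g by (simp add: simple_graph_adj_def)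
  have e: "\<exists>c. (switch_adj sc a1 a2 A i)$u$v = (if c then 0 else A$u$v)" for u v by (rule switch_entry)
  have nn: "0 \<le> (switch_adj sc a1 a2 A i)$u$v" for u v using e[of u v] A01[of u v] by auto
  then show "\<forall>u v. 0 \<le> (switch_adj sc a1 a2 A i)$u$v" by blast
  show "\<forall>u. (switch_adj sc a1 a2 A i)$u$u = 0" using e Ad by (metis (full_types))
  show "\<forall>u. (\<Sum>v\<in>UNIV. (switch_adj sc a1 a2 A i)$u$v) \<le> dmax A"
  proof
    fix u
    have "(\<Sum>v\<in>UNIV. (switch_adj sc a1 a2 A i)$u$v) \<le> (\<Sum>v\<in>UNIV. A$u$v)"
    proof (intro sum_mono)
      fix v :: 'n
      show "(switch_adj sc a1 a2 A i)$u$v \<le> A$u$v" using e[of u v] A01[of u v] by auto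
    qed
    also have "\<dots> = degree A u" by (simp add: degree_def)
    also have "\<dots> \<le> dmax A" unfolding dmax_def by (rule Max_ge) auto
    finally show "(\<Sum>v\<in>UNIV. (switch_adj sc a1 a2 A i)$u$v) \<le> dmax A" .
  qed
qed



theorem theorem1:
  fixes M :: "'w measure" and \<sigma> :: "nat \<Rightarrow> 'w \<Rightarrow> nat"
    and A :: "real^'n^'n" and a1 a2 :: 'n and sc :: scenario
    and p :: "nat \<Rightarrow> real" and h :: real and kbar :: nat
  assumes n3: "CARD('n) \<ge> 3"
    and a12: "a1 \<noteq> a2"
    and graph: "simple_graph_adj A" and conn: "strongly_connected A"
    and p_pos: "\<forall>i\<in>{1..4}. 0 < p i \<and> p i < 1" and p_sum: "(\<Sum>i=1..4. p i) = 1"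
    and h_pos: "0 < h" and h_small: "h < 1 / dmax A"
    and kbar: "kbar \<ge> 1"
    and exp_conn: "strongly_connected (\<Sum>i=1..4. p i *\<^sub>R switch_adj sc a1 a2 A i)"
    and M: "prob_space M"
    and \<sigma>_rv: "\<forall>k. \<sigma> k \<in> M \<rightarrow>\<^sub>M count_space UNIV"
    and \<sigma>_range: "\<forall>k. \<forall>\<omega>\<in>space M. \<sigma> k \<omega> \<in> {1..4}"
    and \<sigma>_dist: "\<forall>k. \<forall>i\<in>{1..4}. measure M {\<omega>\<in>space M. \<sigma> k \<omega> = i} = p i"
    and \<sigma>_indep: "prob_space.indep_vars M (\<lambda>_. count_space UNIV) \<sigma> UNIV"
  shows
    "(let L = (\<lambda>i. laplacian (switch_adj sc a1 a2 A i));
          \<Phi>1 = (\<lambda>i. matpow (mat 1 - h *\<^sub>R L i) kbar);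
          W1 = (\<Sum>i=1..4. p i *\<^sub>R \<Phi>1 i)
      in (\<forall>k. integral\<^sup>L M (\<lambda>\<omega>. \<Phi>1 (\<sigma> k \<omega>)) = W1) \<and>
         (\<exists>\<pi>::real^'n. (\<forall>j. \<pi>$j > 0) \<and> \<pi> v* W1 = \<pi> \<and> sum (\<lambda>j. \<pi>$j) UNIV = 1 \<and>
            (\<lambda>k. matpow W1 k) \<longlonglongrightarrow> ones_outer \<pi> \<and>
            (\<forall>x0. (\<lambda>k. integral\<^sup>L M (traj \<Phi>1 \<sigma> x0 k)) \<longlonglongrightarrow> ones_outer \<pi> *v x0)))
   \<and>
    (let L = (\<lambda>i. laplacian (switch_adj sc a1 a2 A i));
          \<Phi>2 = (\<lambda>i. mexp (- (real kbar * h) *\<^sub>R L i));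
          W2 = (\<Sum>i=1..4. p i *\<^sub>R \<Phi>2 i)
      in (\<forall>k. integral\<^sup>L M (\<lambda>\<omega>. \<Phi>2 (\<sigma> k \<omega>)) = W2) \<and>
         (\<exists>\<pi>::real^'n. (\<forall>j. \<pi>$j > 0) \<and> \<pi> v* W2 = \<pi> \<and> sum (\<lambda>j. \<pi>$j) UNIV = 1 \<and>
            (\<lambda>k. matpow W2 k) \<longlonglongrightarrow> ones_outer \<pi> \<and>
            (\<forall>x0. (\<lambda>k. integral\<^sup>L M (traj \<Phi>2 \<sigma> x0 k)) \<longlonglongrightarrow> ones_outer \<pi> *v x0)))"
proof -
  let ?B = "\<lambda>i. switch_adj sc a1 a2 A i"
  let ?L = "\<lambda>i. laplacian (switch_adj sc a1 a2 A i)"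
  define c where "c = dmax A"
  have Bnn: "\<forall>u v. 0 \<le> (?B i)$u$v" for i using sw_props(1)[OF graph] .
  have Bdg: "\<forall>u. (?B i)$u$u = 0" for i using sw_props(2)[OF graph] .
  have Bdeg: "\<forall>u. (\<Sum>v\<in>UNIV. (?B i)$u$v) \<le> c" for i using sw_props(3)[OF graph] by (simp add: c_def)
  have c0: "0 < c"
  proof (rule ccontr)
    assume "\<not> 0 < c"
    then have "1 / dmax A \<le> 0" by (simp add: c_def)
    then show False using h_pos h_small by linarith
  qed
  have hc: "h * c < 1" using h_small c0 by (simp add: c_def pos_less_divide_eq mult.commute)
  have B4: "?B 4 = A" by (rule switch_4)
  have Ad: "A$u$u = 0" for u using graph by (simp add: simple_graph_adj_def)
  have Anz: "0 < A$u$v \<Longrightarrow> u \<noteq> v" for u v using Ad by auto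
  let ?P = "\<lambda>i. mat 1 - h *\<^sub>R ?L i"
  have Pst: "stoch (?P i)" "\<forall>u. 0 < (?P i)$u$u" for i
    using step_stoch[OF Bnn Bdg Bdeg h_pos hc] by auto
  have part1: "(\<forall>k. integral\<^sup>L M (\<lambda>\<omega>. (\<lambda>i. matpow (?P i) kbar) (\<sigma> k \<omega>)) = (\<Sum>i=1..4. p i *\<^sub>R (\<lambda>i. matpow (?P i) kbar) i)) \<and>
         (\<exists>\<pi>::real^'n. (\<forall>j. \<pi>$j > 0) \<and> \<pi> v* (\<Sum>i=1..4. p i *\<^sub>R (\<lambda>i. matpow (?P i) kbar) i) = \<pi> \<and> sum (\<lambda>j. \<pi>$j) UNIV = 1 \<and>
            (\<lambda>k. matpow (\<Sum>i=1..4. p i *\<^sub>R (\<lambda>i. matpow (?P i) kbar) i) k) \<longlonglongrightarrow> ones_outer \<pi> \<and>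
            (\<forall>x0. (\<lambda>k. integral\<^sup>L M (traj (\<lambda>i. matpow (?P i) kbar) \<sigma> x0 k)) \<longlonglongrightarrow> ones_outer \<pi> *v x0))"
  proof (rule part_generic[OF M \<sigma>_rv \<sigma>_range \<sigma>_dist \<sigma>_indep _ p_pos p_sum _ _ conn])
    show "\<forall>i\<in>{1..4}. stoch (matpow (?P i) kbar)" using Pst stoch_matpow by blast
    have nn4: "\<forall>i j. 0 \<le> (?P 4)$i$j" using Pst(1)[of 4] by (simp add: stoch_def)
    have dg4: "\<forall>i. 0 < (?P 4)$i$i" using Pst(2)[of 4] .
    show "\<forall>u. 0 < matpow (?P 4) kbar $ u $ u"
    proof
      fix u
      show "0 < matpow (?P 4) kbar $ u $ u"
        by (rule pos_mono[OF nn4 dg4, of 0]) (simp_all add: mat_def)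
    qed
    show "\<forall>u v. 0 < A$u$v \<longrightarrow> 0 < matpow (?P 4) kbar $ u $ v"
    proof (intro allI impI)
      fix u v assume a: "0 < A$u$v"
      have "(?P 4)$u$v = h * A$u$v"
        using step_entry[OF Bnn Bdg Bdeg, of h 4 u v] Anz[OF a] B4 by simp
      then have "0 < matpow (?P 4) 1 $ u $ v" using a h_pos by (simp add: matrix_mul_rid)
      then show "0 < matpow (?P 4) kbar $ u $ v" by (rule pos_mono[OF nn4 dg4 _ kbar])
    qed
  qed
  define t where "t = real kbar * h"
  have t0: "0 < t" using kbar h_pos by (simp add: t_def)
  let ?X = "\<lambda>i. t *\<^sub>R (c *\<^sub>R mat 1 - ?L i)"
  have Xnn: "\<forall>u v. 0 \<le> (?X i)$u$v" for i using gen_nonneg[OF Bnn Bdg Bdeg] t0 by auto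
  have Xrs: "\<forall>u. (\<Sum>v\<in>UNIV. (?X i)$u$v) = t * c" for i using gen_rowsum[OF Bnn Bdg Bdeg] by auto
  have Xeq: "mexp (- (real kbar * h) *\<^sub>R ?L i) = mexp (?X i + (-(t*c)) *\<^sub>R mat 1)" for i
    using gen_eq[OF Bnn Bdg Bdeg, of t i] by (simp add: t_def)
  have part2: "(\<forall>k. integral\<^sup>L M (\<lambda>\<omega>. (\<lambda>i. mexp (- (real kbar * h) *\<^sub>R ?L i)) (\<sigma> k \<omega>)) = (\<Sum>i=1..4. p i *\<^sub>R (\<lambda>i. mexp (- (real kbar * h) *\<^sub>R ?L i)) i)) \<and>
         (\<exists>\<pi>::real^'n. (\<forall>j. \<pi>$j > 0) \<and> \<pi> v* (\<Sum>i=1..4. p i *\<^sub>R (\<lambda>i. mexp (- (real kbar * h) *\<^sub>R ?L i)) i) = \<pi> \<and> sum (\<lambda>j. \<pi>$j) UNIV = 1 \<and>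
            (\<lambda>k. matpow (\<Sum>i=1..4. p i *\<^sub>R (\<lambda>i. mexp (- (real kbar * h) *\<^sub>R ?L i)) i) k) \<longlonglongrightarrow> ones_outer \<pi> \<and>
            (\<forall>x0. (\<lambda>k. integral\<^sup>L M (traj (\<lambda>i. mexp (- (real kbar * h) *\<^sub>R ?L i)) \<sigma> x0 k)) \<longlonglongrightarrow> ones_outer \<pi> *v x0))"
  proof (rule part_generic[OF M \<sigma>_rv \<sigma>_range \<sigma>_dist \<sigma>_indep _ p_pos p_sum _ _ conn])
    show "\<forall>i\<in>{1..4}. stoch (mexp (- (real kbar * h) *\<^sub>R ?L i))"
      unfolding Xeq using mexp_props(1)[OF Xnn Xrs] by blast
    show "\<forall>u. 0 < mexp (- (real kbar * h) *\<^sub>R ?L 4) $ u $ u"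
      unfolding Xeq using mexp_props(2)[OF Xnn Xrs] by (meson exp_gt_zero less_le_trans)
    show "\<forall>u v. 0 < A$u$v \<longrightarrow> 0 < mexp (- (real kbar * h) *\<^sub>R ?L 4) $ u $ v"
    proof (intro allI impI)
      fix u v assume a: "0 < A$u$v"
      have "(?X 4)$u$v = t * A$u$v"
        using gen_entry[OF Bnn Bdg Bdeg, of t 4 u v] Anz[OF a] B4 by simp
      then have "0 < exp (-(t*c)) * (?X 4)$u$v" using a t0 by simp
      also have "\<dots> \<le> mexp (?X 4 + (-(t*c)) *\<^sub>R mat 1) $ u $ v" by (rule mexp_props(3)[OF Xnn Xrs])
      finally show "0 < mexp (- (real kbar * h) *\<^sub>R ?L 4) $ u $ v" unfolding Xeq .
    qed
  qed
  show ?thesis unfolding Let_def using part1 part2 by blast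
qed


end
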